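(* Let $\Lambda$ be a finitely aligned left cancellative small category, let $\alpha,\beta\in\Lambda$ with $s(\alpha)=s(\beta)$ and $\alpha\beta^*\in S_\Lambda^{\mathrm{Iso}}$, and write $\alpha\Lambda\cap\beta\Lambda=\bigcup_{i=1}^n\gamma_i\Lambda$ with $\gamma_i\in\Lambda$. Then $D_{\alpha\Lambda}=D_{\beta\Lambda}=\bigcup_{i=1}^nD_{\gamma_i\Lambda}$. Furthermore, if $\gamma\in\Lambda$ satisfies $\gamma\Lambda\cap\alpha\Lambda\neq\emptyset$ or $\gamma\Lambda\cap\beta\Lambda\neq\emptyset$, then there exists $1\le i\le n$ with $\gamma\Lambda\cap\gamma_i\Lambda\neq\emptyset$.
   Context: $\Lambda$ is a left cancellative small category (range $r$, source $s$), finitely aligned: each $\alpha\Lambda\cap\beta\Lambda$ is a finite union of sets $f\Lambda$, where $\alpha\Lambda=\{\alpha\beta:s(\alpha)=r(\beta)\}$. Each $\alpha$ is viewed as the partial bijection $s(\alpha)\Lambda\to\alpha\Lambda$, $\beta\mapsto\alpha\beta$, in the symmetric inverse monoid $\mathcal{I}(\Lambda)$, with inverse $\alpha^*$; $S_\Lambda$ is the inverse semigroup they generate. $S_\Lambda^{\mathrm{Iso}}=\{s\in S_\Lambda: ses^*e\neq0\text{ for all idempotents }0\neq e\leqslant s^*s\}$. The constructible sets are $\mathcal{J}(\Lambda)=\{X\subseteq\Lambda:\mathrm{Id}_X\in S_\Lambda\}$, a semilattice under intersection isomorphic to the idempotent semilattice of $S_\Lambda$ (e.g. $\alpha\Lambda\in\mathcal{J}(\Lambda)$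 since $\mathrm{Id}_{\alpha\Lambda}=\alpha\alpha^*$). Filters are nonempty proper subsets of $\mathcal{J}(\Lambda)$ (not containing $\emptyset$) closed under intersection and upward closed; tight filters are those in the closure of the maximal filters in $\{0,1\}^{\mathcal{J}(\Lambda)}$. For $X\in\mathcal{J}(\Lambda)$, $D_X=\{\xi\text{ tight filter}:X\in\xi\}$. *)

theory Defs
  imports "HOL-Analysis.Analysis"
begin

text \<open>A small category is given by its set of morphisms L, range and source maps
  r s (valued in identity morphisms, which represent the objects), and a composition
  c, where c a b (written ab in the paper) is defined when s a = r b.\<close>

definition small_category ::
  "'a set \<Rightarrow> ('a \<Rightarrow> 'a) \<Rightarrow> ('a \<Rightarrow> 'a) \<Rightarrow> ('a \<Rightarrow> 'a \<Rightarrow> 'a) \<Rightarrow> bool" where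
  "small_category L r s c \<longleftrightarrow>
     (\<forall>a\<in>L. r a \<in> L \<and> s a \<in> L \<and> r (r a) = r a \<and> s (r a) = r a
              \<and> r (s a) = s a \<and> s (s a) = s a
              \<and> c (r a) a = a \<and> c a (s a) = a) \<and>
     (\<forall>a\<in>L. \<forall>b\<in>L. s a = r b \<longrightarrow> c a b \<in> L \<and> r (c a b) = r a \<and> s (c a b) = s b) \<and>
     (\<forall>a\<in>L. \<forall>b\<in>L. \<forall>d\<in>L. s a = r b \<longrightarrow> s b = r d \<longrightarrow> c (c a b) d = c a (c b d))"

definition left_cancellative ::
  "'a set \<Rightarrow> ('a \<Rightarrow> 'a) \<Rightarrow> ('a \<Rightarrow> 'a) \<Rightarrow> ('a \<Rightarrow> 'a \<Rightarrow> 'a) \<Rightarrow> bool" where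
  "left_cancellative L r s c \<longleftrightarrow>
     (\<forall>a\<in>L. \<forall>b\<in>L. \<forall>d\<in>L. s a = r b \<longrightarrow> s a = r d \<longrightarrow> c a b = c a d \<longrightarrow> b = d)"

definition rset :: "'a set \<Rightarrow> ('a \<Rightarrow> 'a) \<Rightarrow> ('a \<Rightarrow> 'a) \<Rightarrow> ('a \<Rightarrow> 'a \<Rightarrow> 'a) \<Rightarrow> 'a \<Rightarrow> 'a set" where
  "rset L r s c a = {c a b | b. b \<in> L \<and> s a = r b}"

definition finitely_aligned ::
  "'a set \<Rightarrow> ('a \<Rightarrow> 'a) \<Rightarrow> ('a \<Rightarrow> 'a) \<Rightarrow> ('a \<Rightarrow> 'a \<Rightarrow> 'a) \<Rightarrow> bool" where
  "finitely_aligned L r s c \<longleftrightarrow>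
     (\<forall>a\<in>L. \<forall>b\<in>L. \<exists>F. finite F \<and> F \<subseteq> L \<and>
        rset L r s c a \<inter> rset L r s c b = (\<Union>g\<in>F. rset L r s c g))"

text \<open>Partial bijections of L are modelled as partial maps; composition map_comp f g
  applies g first (usual composition in the symmetric inverse monoid).\<close>

definition pmor :: "'a set \<Rightarrow> ('a \<Rightarrow> 'a) \<Rightarrow> ('a \<Rightarrow> 'a) \<Rightarrow> ('a \<Rightarrow> 'a \<Rightarrow> 'a) \<Rightarrow> 'a \<Rightarrow> ('a \<rightharpoonup> 'a)" where
  "pmor L r s c a = (\<lambda>b. if b \<in> L \<and> r b = s a then Some (c a b) else None)"

definition pinv :: "('a \<rightharpoonup> 'a) \<Rightarrow> ('a \<rightharpoonup> 'a)" where
  "pinv f = (\<lambda>y. if y \<in> ran f then Some (THE x. f x = Some y) else None)"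

inductive_set S_Lambda :: "'a set \<Rightarrow> ('a \<Rightarrow> 'a) \<Rightarrow> ('a \<Rightarrow> 'a) \<Rightarrow> ('a \<Rightarrow> 'a \<Rightarrow> 'a) \<Rightarrow> ('a \<rightharpoonup> 'a) set"
  for L r s c where
  gen: "a \<in> L \<Longrightarrow> pmor L r s c a \<in> S_Lambda L r s c"
| gen_inv: "a \<in> L \<Longrightarrow> pinv (pmor L r s c a) \<in> S_Lambda L r s c"
| comp: "f \<in> S_Lambda L r s c \<Longrightarrow> g \<in> S_Lambda L r s c \<Longrightarrow> f \<circ>\<^sub>m g \<in> S_Lambda L r s c"

definition S_Iso :: "'a set \<Rightarrow> ('a \<Rightarrow> 'a) \<Rightarrow> ('a \<Rightarrow> 'a) \<Rightarrow> ('a \<Rightarrow> 'a \<Rightarrow> 'a) \<Rightarrow> ('a \<rightharpoonup> 'a) set" where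
  "S_Iso L r s c = {t \<in> S_Lambda L r s c.
     \<forall>e \<in> S_Lambda L r s c. e \<circ>\<^sub>m e = e \<longrightarrow> e \<noteq> Map.empty \<longrightarrow> e = (pinv t \<circ>\<^sub>m t) \<circ>\<^sub>m e \<longrightarrow>
        t \<circ>\<^sub>m e \<circ>\<^sub>m pinv t \<circ>\<^sub>m e \<noteq> Map.empty}"

definition idmap :: "'a set \<Rightarrow> ('a \<rightharpoonup> 'a)" where
  "idmap X = (\<lambda>x. if x \<in> X then Some x else None)"

definition constructible :: "'a set \<Rightarrow> ('a \<Rightarrow> 'a) \<Rightarrow> ('a \<Rightarrow> 'a) \<Rightarrow> ('a \<Rightarrow> 'a \<Rightarrow> 'a) \<Rightarrow> 'a set set" where
  "constructible L r s c = {X. X \<subseteq> L \<and> idmap X \<in> S_Lambda L r s c}"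

definition is_filter :: "'a set set \<Rightarrow> 'a set set \<Rightarrow> bool" where
  "is_filter J \<xi> \<longleftrightarrow> \<xi> \<noteq> {} \<and> \<xi> \<subseteq> J \<and> {} \<notin> \<xi> \<and>
     (\<forall>X\<in>\<xi>. \<forall>Y\<in>\<xi>. X \<inter> Y \<in> \<xi>) \<and>
     (\<forall>X\<in>\<xi>. \<forall>Y\<in>J. X \<subseteq> Y \<longrightarrow> Y \<in> \<xi>)"

definition is_max_filter :: "'a set set \<Rightarrow> 'a set set \<Rightarrow> bool" where
  "is_max_filter J \<xi> \<longleftrightarrow> is_filter J \<xi> \<and> (\<forall>\<eta>. is_filter J \<eta> \<longrightarrow> \<xi> \<subseteq> \<eta> \<longrightarrow> \<eta> = \<xi>)"

text \<open>Filters are identified with their characteristic functions in the product space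
  of bool (discrete) indexed by sets; these functions vanish outside J, so the closure
  agrees with the closure in {0,1}^J.\<close>
definition is_tight_filter :: "'a set set \<Rightarrow> 'a set set \<Rightarrow> bool" where
  "is_tight_filter J \<xi> \<longleftrightarrow> is_filter J \<xi> \<and>
     (\<lambda>X. X \<in> \<xi>) \<in> closure ((\<lambda>\<eta> X. X \<in> \<eta>) ` {\<eta>. is_max_filter J \<eta>})"

definition Dset :: "'a set \<Rightarrow> ('a \<Rightarrow> 'a) \<Rightarrow> ('a \<Rightarrow> 'a) \<Rightarrow> ('a \<Rightarrow> 'a \<Rightarrow> 'a) \<Rightarrow> 'a set \<Rightarrow> 'a set set set" where
  "Dset L r s c X = {\<xi>. is_tight_filter (constructible L r s c) \<xi> \<and> X \<in> \<xi>}"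

end

theory Submission
  imports Defs
begin

lemma ultra:
  assumes mx: "is_max_filter J \<eta>" and Z: "Z \<in> J" "Z \<notin> \<eta>"
    and cl: "\<forall>X\<in>J. \<forall>Y\<in>J. X \<inter> Y \<in> J"
  shows "\<exists>Y\<in>\<eta>. Y \<inter> Z = {}"
proof (rule ccontr)
  assume H: "\<not> ?thesis"
  have f: "is_filter J \<eta>" using mx by (simp add: is_max_filter_def)
  define \<eta>' where "\<eta>' = {W\<in>J. \<exists>Y\<in>\<eta>. Y \<inter> Z \<subseteq> W}"
  have "is_filter J \<eta>'"
    unfolding is_filter_def
  proof (intro conjI ballI impI)
    obtain Y where "Y \<in> \<eta>" using f unfolding is_filter_def by auto
    then show "\<eta>' \<noteq> {}" using Z unfolding \<eta>'_def by blast
    show "\<eta>' \<subseteq> J" unfolding \<eta>'_def by blast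
    show "{} \<notin> \<eta>'" using H unfolding \<eta>'_def by blast
  next
    fix X Y assume "X \<in> \<eta>'" "Y \<in> \<eta>'"
    then obtain X1 Y1 where "X1 \<in> \<eta>" "Y1 \<in> \<eta>" "X1 \<inter> Z \<subseteq> X" "Y1 \<inter> Z \<subseteq> Y" "X \<in> J" "Y \<in> J"
      unfolding \<eta>'_def by blast
    moreover have "X1 \<inter> Y1 \<in> \<eta>" using f calculation unfolding is_filter_def by blast
    ultimately show "X \<inter> Y \<in> \<eta>'" unfolding \<eta>'_def using cl by blast
  next
    fix X Y assume "X \<in> \<eta>'" "Y \<in> J" "X \<subseteq> Y"
    then show "Y \<in> \<eta>'" unfolding \<eta>'_def by blast
  qed
  moreover have "\<eta> \<subseteq> \<eta>'" using f unfolding \<eta>'_def is_filter_def by auto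
  ultimately have "\<eta>' = \<eta>" using mx unfolding is_max_filter_def by blast
  moreover have "Z \<in> \<eta>'" using Z f unfolding \<eta>'_def is_filter_def by blast
  ultimately show False using Z by simp
qed

lemma tight_cover:
  assumes t: "is_tight_filter J \<xi>" and cl: "\<forall>X\<in>J. \<forall>Y\<in>J. X \<inter> Y \<in> J"
    and X: "X \<in> \<xi>" and fin: "finite Zs" and ZJ: "Zs \<subseteq> J"
    and cov: "\<forall>Y\<in>J. Y \<subseteq> X \<longrightarrow> Y \<noteq> {} \<longrightarrow> (\<exists>Z\<in>Zs. Y \<inter> Z \<noteq> {})"
  shows "\<exists>Z\<in>Zs. Z \<in> \<xi>"
proof (rule ccontr)
  assume H: "\<not> ?thesis"
  define U where "U = {f::'a set \<Rightarrow> bool. \<forall>i\<in>insert X Zs. f (id i) \<in> {i = X}}"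
  have oU: "open U" unfolding U_def
    by (rule product_topology_basis') (use fin in \<open>auto simp: open_discrete\<close>)
  have XZ: "X \<notin> Zs" using H X by blast
  have inU: "(\<lambda>Y. Y \<in> \<xi>) \<in> U" unfolding U_def using X H XZ by (auto simp del: insert_iff)
  have "(\<lambda>Y. Y \<in> \<xi>) \<in> closure ((\<lambda>\<eta> Y. Y \<in> \<eta>) ` {\<eta>. is_max_filter J \<eta>})"
    using t unfolding is_tight_filter_def by (rule conjunct2)
  have "((\<lambda>\<eta> Y. Y \<in> \<eta>) ` {\<eta>. is_max_filter J \<eta>}) \<inter> U \<noteq> {}"
    by (rule \<open>(\<lambda>Y. Y \<in> \<xi>) \<in> closure _\<close>[unfolded closure_iff_nhds_not_empty, rule_format, OF order_refl oU inU])
  then obtain \<eta> where mx: "is_max_filter J \<eta>" and etaU: "(\<lambda>Y. Y \<in> \<eta>) \<in> U" by blast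
  have Xe: "X \<in> \<eta>" using etaU unfolding U_def by auto
  have Ze: "\<forall>Z\<in>Zs. Z \<notin> \<eta>" using etaU XZ unfolding U_def by auto
  have f: "is_filter J \<eta>" using mx by (simp add: is_max_filter_def)
  have "\<exists>Y\<in>\<eta>. Y \<subseteq> X \<and> (\<forall>Z\<in>Zs'. Y \<inter> Z = {})" if "finite Zs'" "Zs' \<subseteq> Zs" for Zs'
    using that
  proof (induction Zs' rule: finite_induct)
    case empty
    show ?case using Xe by (intro bexI[of _ X]) auto
  next
    case (insert Z F)
    from insert.prems have ZZ: "Z \<in> Zs" "F \<subseteq> Zs" by auto
    from insert.IH[OF ZZ(2)] obtain Y0 where Y01: "Y0 \<in> \<eta>" and Y023: "Y0 \<subseteq> X \<and> (\<forall>Z\<in>F. Y0 \<inter> Z = {})" by (rule bexE)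
    have Y0: "Y0 \<in> \<eta>" "Y0 \<subseteq> X" "\<forall>Z\<in>F. Y0 \<inter> Z = {}" using Y01 Y023 by simp_all
    have ZJ1: "Z \<in> J" using ZZ(1) ZJ by (rule subsetD[rotated])
    have Zn: "Z \<notin> \<eta>" using Ze ZZ(1) by (rule bspec)
    obtain Y1 where Y1: "Y1 \<in> \<eta>" "Y1 \<inter> Z = {}"
      using ultra[OF mx ZJ1 Zn cl] by (elim bexE)
    have fI: "\<forall>X\<in>\<eta>. \<forall>Y\<in>\<eta>. X \<inter> Y \<in> \<eta>" using f by (simp add: is_filter_def)
    have "Y0 \<inter> Y1 \<in> \<eta>" using fI Y0(1) Y1(1) by blast
    moreover have "Y0 \<inter> Y1 \<subseteq> X" using Y0(2) by (rule subset_trans[rotated]) (rule Int_lower1)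
    moreover have "\<forall>Z'\<in>insert Z F. (Y0 \<inter> Y1) \<inter> Z' = {}" using Y0(3) Y1(2) by auto
    ultimately show ?case by (intro bexI[of _ "Y0 \<inter> Y1"]) auto
  qed
  note aux = this
  have ex: "\<exists>Y\<in>\<eta>. Y \<subseteq> X \<and> (\<forall>Z\<in>Zs. Y \<inter> Z = {})" by (rule aux[OF fin subset_refl])
  then obtain Y where Y1: "Y \<in> \<eta>" and Y23: "Y \<subseteq> X \<and> (\<forall>Z\<in>Zs. Y \<inter> Z = {})" by (rule bexE)
  have Y: "Y \<in> \<eta>" "Y \<subseteq> X" "\<forall>Z\<in>Zs. Y \<inter> Z = {}" using Y1 Y23 by simp_all
  have fJ: "\<eta> \<subseteq> J" using f by (simp add: is_filter_def)
  have fE: "{} \<notin> \<eta>" using f by (simp add: is_filter_def)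
  have "Y \<in> J" "Y \<noteq> {}" using fJ fE Y(1) by blast+
  with cov Y(2) obtain Z where "Z \<in> Zs" "Y \<inter> Z \<noteq> {}" by blast
  then show False using Y(3) by blast
qed


definition pinj :: "('a \<rightharpoonup> 'a) \<Rightarrow> bool" where
  "pinj f \<longleftrightarrow> (\<forall>x x' y. f x = Some y \<longrightarrow> f x' = Some y \<longrightarrow> x = x')"

lemma pinv_Some: "pinj f \<Longrightarrow> pinv f y = Some x \<longleftrightarrow> f x = Some y"
proof -
  assume pj: "pinj f"
  have th: "(THE x. f x = Some y) = x0" if "f x0 = Some y" for x0
    using pj that unfolding pinj_def by (intro the_equality) blast+
  show ?thesis
  proof
    assume h: "pinv f y = Some x"
    then have "y \<in> ran f" unfolding pinv_def by (metis option.distinct(1))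
    then obtain x0 where x0: "f x0 = Some y" unfolding ran_def by blast
    then have "pinv f y = Some x0" unfolding pinv_def using th[OF x0] \<open>y \<in> ran f\<close> by simp
    then show "f x = Some y" using h x0 by simp
  next
    assume h: "f x = Some y"
    then have "y \<in> ran f" unfolding ran_def by blast
    then show "pinv f y = Some x" unfolding pinv_def using th[OF h] by simp
  qed
qed

lemma opt_ext: "(\<And>y x. f y = Some x \<longleftrightarrow> g y = Some x) \<Longrightarrow> f = g"
  by (rule ext) (metis not_None_eq)

lemma pmor_Some: "pmor L r s c a b = Some v \<longleftrightarrow> b \<in> L \<and> r b = s a \<and> v = c a b"
  unfolding pmor_def by auto

lemma idmap_Some: "idmap X y = Some v \<longleftrightarrow> y \<in> X \<and> v = y"
  unfolding idmap_def by auto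

lemma pinj_pmor: "left_cancellative L r s c \<Longrightarrow> a \<in> L \<Longrightarrow> pinj (pmor L r s c a)"
  unfolding pinj_def pmor_Some left_cancellative_def by metis

lemma pinj_comp: "pinj f \<Longrightarrow> pinj g \<Longrightarrow> pinj (f \<circ>\<^sub>m g)"
  unfolding pinj_def map_comp_Some_iff by metis

lemma pinj_pinv: "pinj f \<Longrightarrow> pinj (pinv f)"
  unfolding pinj_def by (metis pinj_def pinv_Some option.inject)

lemma rset_mem: "y \<in> rset L r s c a \<longleftrightarrow> (\<exists>b. b \<in> L \<and> s a = r b \<and> y = c a b)"
  unfolding rset_def by auto

lemma rset_sub: "small_category L r s c \<Longrightarrow> a \<in> L \<Longrightarrow> rset L r s c a \<subseteq> L"
  unfolding rset_def small_category_def by auto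

lemma idmap_rset:
  assumes lc: "left_cancellative L r s c" and a: "a \<in> L"
  shows "idmap (rset L r s c a) = pmor L r s c a \<circ>\<^sub>m pinv (pmor L r s c a)"
proof (rule opt_ext)
  fix y v
  have pj: "pinj (pmor L r s c a)" by (rule pinj_pmor[OF lc a])
  show "idmap (rset L r s c a) y = Some v \<longleftrightarrow> (pmor L r s c a \<circ>\<^sub>m pinv (pmor L r s c a)) y = Some v"
    unfolding map_comp_Some_iff pinv_Some[OF pj] idmap_Some rset_mem pmor_Some by auto
qed

lemma idmap_Int: "idmap (X \<inter> Y) = idmap X \<circ>\<^sub>m idmap Y"
  by (rule opt_ext) (auto simp: map_comp_Some_iff idmap_Some)

lemma constr_Int: "\<forall>X\<in>constructible L r s c. \<forall>Y\<in>constructible L r s c. X \<inter> Y \<in> constructible L r s c"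
  unfolding constructible_def by (auto simp: idmap_Int intro: S_Lambda.comp)

lemma rset_constr:
  assumes "small_category L r s c" "left_cancellative L r s c" "a \<in> L"
  shows "rset L r s c a \<in> constructible L r s c"
  unfolding constructible_def using assms
  by (auto simp: idmap_rset rset_sub intro!: S_Lambda.intros)


theorem lemma4p4:
  fixes L :: "'a set" and r s :: "'a \<Rightarrow> 'a" and c :: "'a \<Rightarrow> 'a \<Rightarrow> 'a"
    and \<alpha> \<beta> :: 'a and n :: nat and \<gamma>s :: "nat \<Rightarrow> 'a"
  assumes cat: "small_category L r s c"
    and lc: "left_cancellative L r s c"
    and fa: "finitely_aligned L r s c"
    and \<alpha>: "\<alpha> \<in> L" and \<beta>: "\<beta> \<in> L" and src: "s \<alpha> = s \<beta>"
    and iso: "pmor L r s c \<alpha> \<circ>\<^sub>m pinv (pmor L r s c \<beta>) \<in> S_Iso L r s c"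
    and \<gamma>s: "\<forall>i\<in>{1..n}. \<gamma>s i \<in> L"
    and inter: "rset L r s c \<alpha> \<inter> rset L r s c \<beta> = (\<Union>i\<in>{1..n}. rset L r s c (\<gamma>s i))"
  shows "Dset L r s c (rset L r s c \<alpha>) = Dset L r s c (rset L r s c \<beta>)
       \<and> Dset L r s c (rset L r s c \<alpha>) = (\<Union>i\<in>{1..n}. Dset L r s c (rset L r s c (\<gamma>s i)))
       \<and> (\<forall>\<gamma>\<in>L. (rset L r s c \<gamma> \<inter> rset L r s c \<alpha> \<noteq> {} \<or> rset L r s c \<gamma> \<inter> rset L r s c \<beta> \<noteq> {})
              \<longrightarrow> (\<exists>i\<in>{1..n}. rset L r s c \<gamma> \<inter> rset L r s c (\<gamma>s i) \<noteq> {}))"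
proof -
  define P where "P = pmor L r s c"
  define R where "R = rset L r s c"
  define J where "J = constructible L r s c"
  define t where "t = P \<alpha> \<circ>\<^sub>m pinv (P \<beta>)"
  have pja: "pinj (P \<alpha>)" and pjb: "pinj (P \<beta>)" unfolding P_def using pinj_pmor[OF lc] \<alpha> \<beta> by auto
  have pjt: "pinj t" unfolding t_def by (intro pinj_comp pinj_pinv pja pjb)
  have PS: "P a x = Some v \<longleftrightarrow> x \<in> L \<and> r x = s a \<and> v = c a x" for a x v
    unfolding P_def by (rule pmor_Some)
  have t_char: "t z = Some w \<longleftrightarrow> (\<exists>x. x \<in> L \<and> r x = s \<beta> \<and> z = c \<beta> x \<and> w = c \<alpha> x)" for z w
    unfolding t_def map_comp_Some_iff pinv_Some[OF pjb] PS using src by auto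
  have Rm: "y \<in> R a \<longleftrightarrow> (\<exists>b. b \<in> L \<and> s a = r b \<and> y = c a b)" for a y
    unfolding R_def by (rule rset_mem)
  have lcE: "x = x'" if "c a x = c a x'" "x \<in> L" "x' \<in> L" "a \<in> L" "r x = s a" "r x' = s a" for a x x'
    using lc that unfolding left_cancellative_def by metis
  have tS: "t \<in> S_Lambda L r s c"
   and tI: "\<And>e. e \<in> S_Lambda L r s c \<Longrightarrow> e \<circ>\<^sub>m e = e \<Longrightarrow> e \<noteq> Map.empty \<Longrightarrow> e = (pinv t \<circ>\<^sub>m t) \<circ>\<^sub>m e \<Longrightarrow>
        t \<circ>\<^sub>m e \<circ>\<^sub>m pinv t \<circ>\<^sub>m e \<noteq> Map.empty"
    using iso unfolding S_Iso_def t_def P_def by auto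
  have B: "\<exists>w z. w \<in> Y \<and> z \<in> Y \<and> t z = Some w"
    if Y: "idmap Y \<in> S_Lambda L r s c" "Y \<noteq> {}" "Y \<subseteq> R \<beta>" for Y
  proof -
    have 1: "idmap Y \<circ>\<^sub>m idmap Y = idmap Y"
      by (rule opt_ext) (auto simp: map_comp_Some_iff idmap_Some)
    have 2: "idmap Y \<noteq> Map.empty" using Y(2) unfolding idmap_def by (metis equals0I option.distinct(1))
    have 3: "idmap Y = (pinv t \<circ>\<^sub>m t) \<circ>\<^sub>m idmap Y"
    proof (rule opt_ext)
      fix y x
      show "idmap Y y = Some x \<longleftrightarrow> ((pinv t \<circ>\<^sub>m t) \<circ>\<^sub>m idmap Y) y = Some x"
      proof (cases "y \<in> Y")
        case True
        then obtain b where b: "b \<in> L" "s \<beta> = r b" "y = c \<beta> b" using Y(3) Rm by blast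
        then have ty: "t y = Some (c \<alpha> b)" using t_char by auto
        show ?thesis unfolding map_comp_Some_iff pinv_Some[OF pjt] idmap_Some
          using True ty pjt unfolding pinj_def by auto
      qed (simp add: map_comp_Some_iff idmap_Some)
    qed
    from tI[OF Y(1) 1 2 3] obtain k v where "(t \<circ>\<^sub>m idmap Y \<circ>\<^sub>m pinv t \<circ>\<^sub>m idmap Y) k = Some v"
      by (metis not_Some_eq)
    then show ?thesis unfolding map_comp_Some_iff pinv_Some[OF pjt] idmap_Some by auto
  qed
  have covb: "Y \<inter> R \<alpha> \<noteq> {}" if "Y \<in> J" "Y \<subseteq> R \<beta>" "Y \<noteq> {}" for Y
  proof -
    from B[of Y] that obtain w z where "w \<in> Y" "t z = Some w" unfolding J_def constructible_def by auto
    then obtain x where x: "x \<in> L" "r x = s \<beta>" "w = c \<alpha> x" using t_char by blast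
    then have "w \<in> R \<alpha>" unfolding Rm using src by auto
    then show ?thesis using \<open>w \<in> Y\<close> by blast
  qed
  have cova: "Y \<inter> R \<beta> \<noteq> {}" if Y: "Y \<in> J" "Y \<subseteq> R \<alpha>" "Y \<noteq> {}" for Y
  proof -
    define Y' where "Y' = {c \<beta> x | x. x \<in> L \<and> r x = s \<beta> \<and> c \<alpha> x \<in> Y}"
    have "idmap Y' = P \<beta> \<circ>\<^sub>m pinv (P \<alpha>) \<circ>\<^sub>m idmap Y \<circ>\<^sub>m P \<alpha> \<circ>\<^sub>m pinv (P \<beta>)"
    proof (rule opt_ext)
      fix w v
      show "idmap Y' w = Some v \<longleftrightarrow> (P \<beta> \<circ>\<^sub>m pinv (P \<alpha>) \<circ>\<^sub>m idmap Y \<circ>\<^sub>m P \<alpha> \<circ>\<^sub>m pinv (P \<beta>)) w = Some v"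
        (is "?l \<longleftrightarrow> ?r")
      proof
        assume ?l
        then obtain x where "x \<in> L" "r x = s \<beta>" "c \<alpha> x \<in> Y" "w = c \<beta> x" "v = w" unfolding idmap_Some Y'_def by blast
        then show ?r
          unfolding map_comp_Some_iff pinv_Some[OF pja] pinv_Some[OF pjb] idmap_Some PS using src by auto
      next
        assume ?r
        then obtain x u x' where h: "P \<beta> x = Some w" "P \<alpha> x = Some u" "u \<in> Y" "P \<alpha> x' = Some u" "P \<beta> x' = Some v"
          unfolding map_comp_Some_iff pinv_Some[OF pja] pinv_Some[OF pjb] idmap_Some by blast
        then have "x = x'" using pja unfolding pinj_def by blast
        then show ?l using h unfolding PS Y'_def idmap_Some by auto
      qed
    qed
    then have S': "idmap Y' \<in> S_Lambda L r s c"
      using Y(1) \<alpha> \<beta> unfolding J_def constructible_def P_def by (auto intro!: S_Lambda.intros)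
    obtain y where "y \<in> Y" using Y(3) by blast
    then obtain x where x: "x \<in> L" "s \<alpha> = r x" "y = c \<alpha> x" using Y(2) Rm by blast
    then have "c \<beta> x \<in> Y'" unfolding Y'_def using \<open>y \<in> Y\<close> src by auto
    then have ne: "Y' \<noteq> {}" by blast
    have sub: "Y' \<subseteq> R \<beta>" unfolding Y'_def R_def rset_def by auto
    from B[OF S' ne sub] obtain w z where wz: "w \<in> Y'" "z \<in> Y'" "t z = Some w" by blast
    from wz(2) obtain x1 where x1: "x1 \<in> L" "r x1 = s \<beta>" "c \<alpha> x1 \<in> Y" "z = c \<beta> x1" unfolding Y'_def by blast
    from wz(3) obtain x2 where x2: "x2 \<in> L" "r x2 = s \<beta>" "z = c \<beta> x2" "w = c \<alpha> x2" using t_char by blast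
    have "x1 = x2" using lcE[of \<beta> x1 x2] x1 x2 \<beta> by auto
    then have "w \<in> Y" using x1 x2 by simp
    moreover have "w \<in> R \<beta>" using wz(1) sub by blast
    ultimately show ?thesis by blast
  qed
  have RJ: "a \<in> L \<Longrightarrow> R a \<in> J" for a unfolding R_def J_def using rset_constr[OF cat lc] by blast
  have Jcl: "\<forall>X\<in>J. \<forall>Y\<in>J. X \<inter> Y \<in> J" unfolding J_def by (rule constr_Int)
  have meet: "\<exists>i\<in>{1..n}. Y \<inter> R (\<gamma>s i) \<noteq> {}" if "Y \<inter> R \<alpha> \<inter> R \<beta> \<noteq> {}" for Y
    using that inter unfolding R_def by blast
  have Zfin: "finite (R ` \<gamma>s ` {1..n})" by simp
  have ZJ: "R ` \<gamma>s ` {1..n} \<subseteq> J" using \<gamma>s RJ by auto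
  have D: "Dset L r s c (R a) = (\<Union>i\<in>{1..n}. Dset L r s c (R (\<gamma>s i)))"
    if a: "a \<in> L" and cv: "\<And>Y. Y \<in> J \<Longrightarrow> Y \<subseteq> R a \<Longrightarrow> Y \<noteq> {} \<Longrightarrow> \<exists>i\<in>{1..n}. Y \<inter> R (\<gamma>s i) \<noteq> {}"
      and gs: "\<And>i. i \<in> {1..n} \<Longrightarrow> R (\<gamma>s i) \<subseteq> R a" for a
  proof
    show "Dset L r s c (R a) \<subseteq> (\<Union>i\<in>{1..n}. Dset L r s c (R (\<gamma>s i)))"
    proof
      fix \<xi> assume "\<xi> \<in> Dset L r s c (R a)"
      then have t: "is_tight_filter J \<xi>" and X: "R a \<in> \<xi>" unfolding Dset_def J_def by simp_all
      have "\<exists>Z\<in>R ` \<gamma>s ` {1..n}. Z \<in> \<xi>"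
      proof (rule tight_cover[OF t Jcl X Zfin ZJ], intro ballI impI)
        fix Y assume "Y \<in> J" "Y \<subseteq> R a" "Y \<noteq> {}"
        then obtain i where "i \<in> {1..n}" "Y \<inter> R (\<gamma>s i) \<noteq> {}" using cv by blast
        then show "\<exists>Z\<in>R ` \<gamma>s ` {1..n}. Y \<inter> Z \<noteq> {}" by blast
      qed
      then obtain i where i: "i \<in> {1..n}" "R (\<gamma>s i) \<in> \<xi>" by blast
      have "\<xi> \<in> Dset L r s c (R (\<gamma>s i))" unfolding Dset_def using t i J_def by simp
      then show "\<xi> \<in> (\<Union>i\<in>{1..n}. Dset L r s c (R (\<gamma>s i)))"
        using i by blast
    qed
  next
    show "(\<Union>i\<in>{1..n}. Dset L r s c (R (\<gamma>s i))) \<subseteq> Dset L r s c (R a)"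
    proof
      fix \<xi> assume "\<xi> \<in> (\<Union>i\<in>{1..n}. Dset L r s c (R (\<gamma>s i)))"
      then obtain i where i: "i \<in> {1..n}" and "\<xi> \<in> Dset L r s c (R (\<gamma>s i))" by blast
      then have t: "is_tight_filter J \<xi>" and X: "R (\<gamma>s i) \<in> \<xi>"
        unfolding Dset_def J_def by simp_all
      have up: "\<forall>X\<in>\<xi>. \<forall>Y\<in>J. X \<subseteq> Y \<longrightarrow> Y \<in> \<xi>" using t unfolding is_tight_filter_def is_filter_def by simp
      have "R a \<in> \<xi>" using up X gs[OF i] RJ[OF a] by blast
      then show "\<xi> \<in> Dset L r s c (R a)" using t unfolding Dset_def J_def by simp
    qed
  qed
  have Da: "Dset L r s c (R \<alpha>) = (\<Union>i\<in>{1..n}. Dset L r s c (R (\<gamma>s i)))"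
  proof (rule D[OF \<alpha>])
    fix Y assume "Y \<in> J" "Y \<subseteq> R \<alpha>" "Y \<noteq> {}"
    then show "\<exists>i\<in>{1..n}. Y \<inter> R (\<gamma>s i) \<noteq> {}" using cova meet by blast
  next
    fix i assume "i \<in> {1..n}" then show "R (\<gamma>s i) \<subseteq> R \<alpha>" using inter unfolding R_def by blast
  qed
  have Db: "Dset L r s c (R \<beta>) = (\<Union>i\<in>{1..n}. Dset L r s c (R (\<gamma>s i)))"
  proof (rule D[OF \<beta>])
    fix Y assume "Y \<in> J" "Y \<subseteq> R \<beta>" "Y \<noteq> {}"
    then show "\<exists>i\<in>{1..n}. Y \<inter> R (\<gamma>s i) \<noteq> {}" using covb meet by blast
  next
    fix i assume "i \<in> {1..n}" then show "R (\<gamma>s i) \<subseteq> R \<beta>" using inter unfolding R_def by blast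
  qed
  have third: "\<exists>i\<in>{1..n}. R \<gamma> \<inter> R (\<gamma>s i) \<noteq> {}"
    if g: "\<gamma> \<in> L" and ne: "R \<gamma> \<inter> R \<alpha> \<noteq> {} \<or> R \<gamma> \<inter> R \<beta> \<noteq> {}" for \<gamma>
  proof -
    have "R \<gamma> \<inter> R \<alpha> \<in> J" "R \<gamma> \<inter> R \<beta> \<in> J" using Jcl RJ g \<alpha> \<beta> by auto
    then have "R \<gamma> \<inter> R \<alpha> \<inter> R \<beta> \<noteq> {}" using ne cova[of "R \<gamma> \<inter> R \<alpha>"] covb[of "R \<gamma> \<inter> R \<beta>"] by blast
    then show ?thesis using meet by blast
  qed
  show ?thesis using Da Db third unfolding R_def by auto
qed

end
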